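(* For any recurrent set $F\subset A^*$ and any integer $d\ge1$, there are only finitely many finite $F$-maximal bifix codes $X\subset F$ of $F$-degree $d$.
   Context: $A$ is a finite alphabet. $F$ is recurrent if it is nonempty, closed under factors, and for all $u,w\in F$ there is $v\in F$ with $uvw\in F$. A bifix code is a set of nonempty words none of which is a proper prefix or proper suffix of another; $X\subset F$ is $F$-maximal bifix if not properly contained in a bifix code contained in $F$. A parse of $w$ with respect to $X$ is a triple $(v,x,u)$ with $w=vxu$, $v$ having no suffix in $X$, $x\in X^*$, $u$ having no prefix in $X$; $\delta_X(w)$ is their number and the $F$-degree is $d_F(X)=\max_{w\in F}\delta_X(w)$. *)

theory Defs
  imports Main "HOL-Library.Sublist"
begin

text \<open>Words over a finite alphabet: lists over a type of class finite.
  Factors are contiguous sublists (library notion sublist).\<close>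

definition factorial :: "'a list set \<Rightarrow> bool" where
  "factorial F \<longleftrightarrow> (\<forall>w\<in>F. \<forall>u. sublist u w \<longrightarrow> u \<in> F)"

definition recurrent :: "'a list set \<Rightarrow> bool" where
  "recurrent F \<longleftrightarrow> F \<noteq> {} \<and> factorial F \<and>
     (\<forall>u\<in>F. \<forall>w\<in>F. \<exists>v\<in>F. u @ v @ w \<in> F)"

definition bifix_code :: "'a list set \<Rightarrow> bool" where
  "bifix_code X \<longleftrightarrow> [] \<notin> X \<and>
     (\<forall>x\<in>X. \<forall>y\<in>X. \<not> strict_prefix x y \<and> \<not> strict_suffix x y)"

definition F_maximal_bifix :: "'a list set \<Rightarrow> 'a list set \<Rightarrow> bool" where
  "F_maximal_bifix F X \<longleftrightarrow> bifix_code X \<and> X \<subseteq> F \<and>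
     \<not> (\<exists>Y. bifix_code Y \<and> Y \<subseteq> F \<and> X \<subset> Y)"

definition word_star :: "'a list set \<Rightarrow> 'a list set" where
  "word_star X = {concat xs | xs. set xs \<subseteq> X}"

definition parses :: "'a list set \<Rightarrow> 'a list \<Rightarrow> ('a list \<times> 'a list \<times> 'a list) set" where
  "parses X w = {(v, x, u). w = v @ x @ u \<and> \<not> (\<exists>s\<in>X. suffix s v)
      \<and> x \<in> word_star X \<and> \<not> (\<exists>p\<in>X. prefix p u)}"

definition delta :: "'a list set \<Rightarrow> 'a list \<Rightarrow> nat" where
  "delta X w = card (parses X w)"

definition has_F_degree :: "'a list set \<Rightarrow> 'a list set \<Rightarrow> nat \<Rightarrow> bool" where
  "has_F_degree F X d \<longleftrightarrow> (\<exists>w\<in>F. delta X w = d) \<and> (\<forall>w\<in>F. delta X w \<le> d)"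

end

theory Submission
  imports Defs
begin


definition R :: "'a list set \<Rightarrow> 'a list \<Rightarrow> 'a list set" where
  "R X w = {u. suffix u w \<and> \<not> (\<exists>p\<in>X. prefix p u)}"

lemma finite_R: "finite (R X w)"
proof -
  have "R X w \<subseteq> set (suffixes w)" by (auto simp: R_def)
  thus ?thesis by (rule finite_subset) simp
qed

lemma finite_parses: "finite (parses X w)"
proof -
  have "parses X w \<subseteq> set (prefixes w) \<times> set (sublists w) \<times> set (suffixes w)"
    by (fastforce simp: parses_def sublist_def suffix_def prefix_def)
  thus ?thesis by (rule finite_subset) simp
qed

lemma word_star_nil: "[] \<in> word_star X"
  unfolding word_star_def by (auto intro: exI[of _ "[]"])

lemma word_star_snoc: "x \<in> word_star X \<Longrightarrow> q \<in> X \<Longrightarrow> x @ q \<in> word_star X"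
proof -
  assume "x \<in> word_star X" "q \<in> X"
  then obtain xs where "x = concat xs" "set xs \<subseteq> X" unfolding word_star_def by auto
  then show ?thesis using \<open>q \<in> X\<close> unfolding word_star_def by (intro CollectI exI[of _ "xs @ [q]"]) auto
qed

lemma word_star_last:
  assumes "x \<in> word_star X" "x \<noteq> []" "[] \<notin> X"
  shows "\<exists>x' q. x = x' @ q \<and> x' \<in> word_star X \<and> q \<in> X"
proof -
  obtain xs where xs: "x = concat xs" "set xs \<subseteq> X" using assms(1) unfolding word_star_def by auto
  have "xs \<noteq> []" using xs assms(2) by auto
  then obtain ys q where "xs = ys @ [q]" by (metis rev_exhaust)
  thus ?thesis using xs unfolding word_star_def by auto
qed

lemma suffix_code_eq:
  assumes "bifix_code X" "q \<in> X" "q' \<in> X" "a @ q = b @ q'"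
  shows "q = q'"
proof -
  have "suffix q (a@q)" by (simp add: suffix_def)
  moreover have "suffix q' (b@q')" by (simp add: suffix_def)
  ultimately have "suffix q (a@q)" "suffix q' (a@q)" using assms(4) by simp_all
  then have "suffix q q' \<or> suffix q' q" by (rule suffix_same_cases)
  thus ?thesis using assms(1-3) unfolding bifix_code_def strict_suffix_def by auto
qed

lemma unique_left:
  assumes bc: "bifix_code X"
  shows "\<And>v x v' x'. v @ x = v' @ x' \<Longrightarrow> length (v @ x) = n \<Longrightarrow> x \<in> word_star X \<Longrightarrow> x' \<in> word_star X
    \<Longrightarrow> \<not> (\<exists>s\<in>X. suffix s v) \<Longrightarrow> \<not> (\<exists>s\<in>X. suffix s v') \<Longrightarrow> v = v' \<and> x = x'"
proof (induction n rule: less_induct)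
  case (less n v x v' x')
  have nil: "[] \<notin> X" using bc by (simp add: bifix_code_def)
  show ?case
  proof (cases "x = []")
    case True
    show ?thesis
    proof (cases "x' = []")
      case True with \<open>x = []\<close> less.prems(1) show ?thesis by simp
    next
      case False
      then obtain y q where "x' = y @ q" "q \<in> X" using word_star_last[OF less.prems(4) _ nil] by blast
      with less.prems(1,5) \<open>x = []\<close> have False by (auto simp: suffix_def)
      thus ?thesis ..
    qed
  next
    case False
    then obtain y q where yq: "x = y @ q" "q \<in> X" "y \<in> word_star X"
      using word_star_last[OF less.prems(3) _ nil] by blast
    show ?thesis
    proof (cases "x' = []")
      case True
      with less.prems(1,6) yq show ?thesis by (auto simp: suffix_def)
    next
      case False
      then obtain y' q' where yq': "x' = y' @ q'" "q' \<in> X" "y' \<in> word_star X"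
        using word_star_last[OF less.prems(4) _ nil] by blast
      have "(v @ y) @ q = (v' @ y') @ q'" using less.prems(1) yq yq' by simp
      then have qq: "q = q'" using suffix_code_eq[OF bc yq(2) yq'(2)] by blast
      have e: "v @ y = v' @ y'" using less.prems(1) yq yq' qq by simp
      have "q \<noteq> []" using yq(2) nil by auto
      then have "length q > 0" by simp
      moreover have "length (v @ y) + length q = n" using less.prems(2) yq by simp
      ultimately have "length (v @ y) < n" by linarith
      from less.IH[OF this e refl yq(3) yq'(3) less.prems(5,6)] qq yq yq' show ?thesis by simp
    qed
  qed
qed

lemma exists_left:
  "\<And>y. length y = n \<Longrightarrow> \<exists>v x. y = v @ x \<and> x \<in> word_star X \<and> \<not> (\<exists>s\<in>X. suffix s v)" if "[] \<notin> X"
proof (induction n rule: less_induct)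
  case (less n y)
  show ?case
  proof (cases "\<exists>s\<in>X. suffix s y")
    case False then show ?thesis using word_star_nil by (metis append_Nil2)
  next
    case True
    then obtain s y' where s: "s \<in> X" "y = y' @ s" by (auto simp: suffix_def)
    have "s \<noteq> []" using s that by auto
    then have "length s > 0" by simp
    moreover have "length y' + length s = n" using less.prems s by simp
    ultimately have "length y' < n" by linarith
    from less.IH[OF this refl] obtain v x where "y' = v @ x" "x \<in> word_star X" "\<not> (\<exists>s\<in>X. suffix s v)" by blast
    then show ?thesis using s word_star_snoc[of x X s] by (intro exI[of _ v] exI[of _ "x @ s"]) auto
  qed
qed

lemma delta_R:
  assumes bc: "bifix_code X"
  shows "delta X w = card (R X w)"
proof -
  have nil: "[] \<notin> X" using bc by (simp add: bifix_code_def)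
  have "bij_betw (\<lambda>(v,x,u). u) (parses X w) (R X w)"
  proof (rule bij_betwI')
    fix a b assume "a \<in> parses X w" "b \<in> parses X w"
    then obtain v x u v' x' u' where ab: "a = (v,x,u)" "b = (v',x',u')"
      and p: "w = v@x@u" "x \<in> word_star X" "\<not> (\<exists>s\<in>X. suffix s v)"
             "w = v'@x'@u'" "x' \<in> word_star X" "\<not> (\<exists>s\<in>X. suffix s v')"
      unfolding parses_def by auto
    show "((\<lambda>(v,x,u). u) a = (\<lambda>(v,x,u). u) b) = (a = b)"
    proof
      assume "(\<lambda>(v,x,u). u) a = (\<lambda>(v,x,u). u) b"
      then have "u = u'" using ab by simp
      then have "v @ x = v' @ x'" using p by simp
      from unique_left[OF bc this refl p(2) p(5) p(3) p(6)] show "a = b" using ab \<open>u = u'\<close> by simp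
    qed simp
  next
    fix a assume "a \<in> parses X w"
    then show "(\<lambda>(v,x,u). u) a \<in> R X w" unfolding parses_def R_def by (auto simp: suffix_def)
  next
    fix u assume "u \<in> R X w"
    then obtain y where y: "w = y @ u" "\<not> (\<exists>p\<in>X. prefix p u)" unfolding R_def suffix_def by auto
    obtain v x where "y = v @ x" "x \<in> word_star X" "\<not> (\<exists>s\<in>X. suffix s v)"
      using exists_left[OF nil refl] by blast
    then show "\<exists>a\<in>parses X w. u = (\<lambda>(v,x,u). u) a"
      using y by (intro bexI[of _ "(v,x,u)"]) (auto simp: parses_def)
  qed
  then show ?thesis unfolding delta_def by (rule bij_betw_same_card)
qed


lemma R_mono_left: "R X w \<subseteq> R X (a @ w)"
  unfolding R_def by (auto simp: suffix_def)

lemma delta_left_mono: "bifix_code X \<Longrightarrow> delta X w \<le> delta X (a @ w)"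
  by (simp add: delta_R card_mono[OF finite_R R_mono_left])

lemma delta_snoc_mono:
  assumes bc: "bifix_code X"
  shows "delta X w \<le> delta X (w @ [c])"
proof -
  have nil: "[] \<notin> X" using bc by (simp add: bifix_code_def)
  define f where "f = (\<lambda>(v::'a list, x::'a list, u::'a list).
     if u @ [c] \<in> X then (v, x @ (u @ [c]), ([]::'a list)) else (v, x, u @ [c]))"
  have "inj_on f (parses X w)"
  proof (rule inj_onI)
    fix a b assume "a \<in> parses X w" "b \<in> parses X w" and fe: "f a = f b"
    then obtain v x u v' x' u' where ab: "a = (v,x,u)" "b = (v',x',u')"
      and p: "w = v@x@u" "w = v'@x'@u'"
      unfolding parses_def by auto
    show "a = b"
    proof (cases "u @ [c] \<in> X")
      case True
      show ?thesis
      proof (cases "u' @ [c] \<in> X")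
        case True
        have "v = v'" "x @ (u @ [c]) = x' @ (u' @ [c])" using fe ab \<open>u @ [c] \<in> X\<close> True by (auto simp: f_def)
        then have "u @ [c] = u' @ [c]" using suffix_code_eq[OF bc \<open>u @ [c] \<in> X\<close> True] by blast
        then show ?thesis using ab \<open>v = v'\<close> \<open>x @ (u @ [c]) = x' @ (u' @ [c])\<close> by simp
      next
        case False
        then show ?thesis using fe ab \<open>u @ [c] \<in> X\<close> by (auto simp: f_def)
      qed
    next
      case False
      show ?thesis
      proof (cases "u' @ [c] \<in> X")
        case True
        then show ?thesis using fe ab False by (auto simp: f_def)
      next
        case False
        then show ?thesis using fe ab \<open>u @ [c] \<notin> X\<close> by (auto simp: f_def)
      qed
    qed
  qed
  moreover have "f ` parses X w \<subseteq> parses X (w @ [c])"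
  proof
    fix b assume "b \<in> f ` parses X w"
    then obtain v x u where a: "(v,x,u) \<in> parses X w" and b: "b = f (v,x,u)" by auto
    from a have p: "w = v@x@u" "\<not> (\<exists>s\<in>X. suffix s v)" "x \<in> word_star X" "\<not> (\<exists>p\<in>X. prefix p u)"
      unfolding parses_def by auto
    show "b \<in> parses X (w @ [c])"
    proof (cases "u @ [c] \<in> X")
      case True
      then have "b = (v, x @ (u @ [c]), [])" using b by (simp add: f_def)
      then show ?thesis using p True word_star_snoc[OF p(3) True] nil unfolding parses_def by auto
    next
      case False
      then have "b = (v, x, u @ [c])" using b by (simp add: f_def)
      moreover have "\<not> (\<exists>q\<in>X. prefix q (u @ [c]))" using p(4) False by auto
      ultimately show ?thesis using p unfolding parses_def by auto
    qed
  qed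
  ultimately have "card (parses X w) \<le> card (parses X (w @ [c]))"
    by (intro card_inj_on_le finite_parses)
  then show ?thesis by (simp add: delta_def)
qed

lemma delta_right_mono: "bifix_code X \<Longrightarrow> delta X w \<le> delta X (w @ t)"
proof (induction t arbitrary: w)
  case Nil then show ?case by simp
next
  case (Cons c t)
  have "delta X w \<le> delta X (w @ [c])" by (rule delta_snoc_mono[OF Cons.prems])
  also have "\<dots> \<le> delta X ((w @ [c]) @ t)" by (rule Cons.IH[OF Cons.prems])
  finally show ?case by simp
qed

lemma delta_sublist_mono:
  assumes "bifix_code X" "sublist w' w"
  shows "delta X w' \<le> delta X w"
proof -
  obtain a b where "w = a @ w' @ b" using assms(2) by (auto simp: sublist_def)
  have "delta X w' \<le> delta X (w' @ b)" by (rule delta_right_mono[OF assms(1)])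
  also have "\<dots> \<le> delta X (a @ (w' @ b))" by (rule delta_left_mono[OF assms(1)])
  finally show ?thesis using \<open>w = a @ w' @ b\<close> by simp
qed

lemma factorial_sublist: "factorial F \<Longrightarrow> w \<in> F \<Longrightarrow> sublist u w \<Longrightarrow> u \<in> F"
  unfolding factorial_def by blast

lemma R_tl_card:
  assumes "r \<in> R X w" "r = c # r'"
  shows "card (R X r') < card (R X w)"
proof -
  have "R X r' \<subseteq> R X w - {r}"
  proof
    fix u assume "u \<in> R X r'"
    then have "suffix u r'" "\<not> (\<exists>p\<in>X. prefix p u)" unfolding R_def by auto
    moreover have "suffix r w" using assms(1) unfolding R_def by auto
    moreover have "suffix r' r" using assms(2) by (simp add: suffix_def)
    ultimately have "suffix u w" "u \<noteq> r" using assms(2)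
      by (auto dest: suffix_length_le intro: suffix_order.trans)
    then show "u \<in> R X w - {r}" using \<open>\<not> (\<exists>p\<in>X. prefix p u)\<close> unfolding R_def by auto
  qed
  then have "card (R X r') \<le> card (R X w - {r})" by (intro card_mono) (auto intro: finite_subset finite_R)
  also have "\<dots> < card (R X w)" using assms(1) finite_R by (intro card_Diff1_less) auto
  finally show ?thesis .
qed


lemma long_word:
  assumes rec: "recurrent F" and bc: "bifix_code X" and deg: "has_F_degree F X d"
    and wF: "w \<in> F" and lt: "delta X w < d"
  shows "\<exists>q\<in>X. length w < length q"
proof -
  obtain w0 where w0: "w0 \<in> F" "delta X w0 = d" using deg unfolding has_F_degree_def by auto
  have le: "\<And>u. u \<in> F \<Longrightarrow> delta X u \<le> d" using deg unfolding has_F_degree_def by auto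
  obtain v where "v \<in> F" and pF: "w0 @ v @ w \<in> F" using rec w0(1) wF unfolding recurrent_def by blast
  define p where "p = w0 @ v @ w"
  have "delta X w0 \<le> delta X p" unfolding p_def by (rule delta_right_mono[OF bc])
  then have cp: "card (R X p) = d" using le[of p] pF w0(2) by (simp add: p_def delta_R[OF bc])
  have cw: "card (R X w) < d" using lt by (simp add: delta_R[OF bc])
  have sub: "R X w \<subseteq> R X p" unfolding p_def using R_mono_left[of X w "w0 @ v"] by simp
  have "\<not> R X p \<subseteq> R X w"
  proof
    assume "R X p \<subseteq> R X w"
    then have "card (R X p) \<le> card (R X w)" by (intro card_mono finite_R)
    then show False using cp cw by simp
  qed
  then obtain s where s: "s \<in> R X p" "s \<notin> R X w" by auto
  have sp: "suffix s p" and snp: "\<not> (\<exists>q\<in>X. prefix q s)" using s(1) unfolding R_def by auto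
  have "\<not> suffix s w" using s snp unfolding R_def by auto
  moreover have "suffix w p" unfolding p_def by (simp add: suffix_def)
  ultimately have ls: "length w < length s" using sp suffix_length_suffix[of s p w] by linarith
  obtain v' where "v' \<in> F" and zF: "p @ v' @ w0 \<in> F" using rec pF w0(1) unfolding recurrent_def p_def by blast
  define z where "z = p @ v' @ w0"
  have sub2: "R X w0 \<subseteq> R X z" unfolding z_def using R_mono_left[of X w0 "p @ v'"] by simp
  have "card (R X z) \<le> d" using le[of z] zF by (simp add: z_def delta_R[OF bc])
  moreover have "card (R X w0) = d" using w0(2) by (simp add: delta_R[OF bc])
  ultimately have Rz: "R X z = R X w0"
    using card_subset_eq[OF finite_R sub2] card_mono[OF finite_R sub2] by simp
  define t where "t = s @ v' @ w0"
  have st: "suffix t z" using sp unfolding t_def z_def by (auto simp: suffix_def)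
  have "\<exists>q\<in>X. prefix q t"
  proof (rule ccontr)
    assume "\<not> (\<exists>q\<in>X. prefix q t)"
    then have "t \<in> R X w0" using st Rz unfolding R_def by auto
    then have "length t \<le> length w0" unfolding R_def by (auto dest: suffix_length_le)
    then show False using ls unfolding t_def by simp
  qed
  then obtain q where q: "q \<in> X" "prefix q t" by auto
  have "length s < length q"
  proof (rule ccontr)
    assume "\<not> length s < length q"
    then have "prefix q s" using prefix_length_prefix[of q t s] q(2) unfolding t_def by simp
    then show False using snp q(1) by auto
  qed
  then show ?thesis using q(1) ls by (intro bexI[of _ q]) auto
qed

definition RS :: "'a list set \<Rightarrow> nat \<Rightarrow> 'a list \<Rightarrow> 'a list set" where
  "RS S M w = {u. suffix u w \<and> length u \<le> M \<and> \<not> (\<exists>p\<in>S. prefix p u)}"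

definition PP :: "'a list set \<Rightarrow> 'a list set \<Rightarrow> nat \<Rightarrow> nat \<Rightarrow> 'a list set" where
  "PP F S M k = {w\<in>F. (\<forall>w'. sublist w' w \<longrightarrow> length w' = Suc M \<longrightarrow> (\<exists>q\<in>S. prefix q w'))
      \<and> card (RS S M w) \<le> k}"

lemma finite_RS: "finite (RS S M w)"
proof -
  have "RS S M w \<subseteq> set (suffixes w)" by (auto simp: RS_def)
  thus ?thesis by (rule finite_subset) simp
qed

lemma short_R:
  assumes bc: "bifix_code X" and fac: "factorial F"
    and ih: "\<forall>w\<in>F. delta X w \<le> k \<longrightarrow> length w \<le> N0"
    and wF: "w \<in> F" and dw: "delta X w \<le> Suc k" and r: "r \<in> R X w"
  shows "length r \<le> Suc N0"
proof (cases r)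
  case Nil then show ?thesis by simp
next
  case (Cons c r')
  have "card (R X r') < card (R X w)" by (rule R_tl_card[OF r Cons])
  then have "delta X r' \<le> k" using dw by (simp add: delta_R[OF bc])
  moreover have "r' \<in> F"
  proof -
    have "suffix r w" using r unfolding R_def by auto
    moreover have "suffix r' r" using Cons by (simp add: suffix_def)
    ultimately have "sublist r' w" by (meson suffix_imp_sublist suffix_order.trans)
    then show ?thesis using factorial_sublist[OF fac wF] by blast
  qed
  ultimately show ?thesis using ih Cons by auto
qed

lemma U_sub_P:
  assumes bc: "bifix_code X" and fac: "factorial F"
    and A: "\<forall>w\<in>F. delta X w \<le> Suc k \<longrightarrow> (\<forall>r\<in>R X w. length r \<le> M)"
    and wF: "w \<in> F" and dw: "delta X w \<le> Suc k"
  shows "w \<in> PP F (X \<inter> {u. length u \<le> Suc M}) M (Suc k)"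
proof -
  have "\<exists>q\<in>X \<inter> {u. length u \<le> Suc M}. prefix q w'" if "sublist w' w" "length w' = Suc M" for w'
  proof -
    have w'F: "w' \<in> F" using factorial_sublist[OF fac wF that(1)] .
    have "delta X w' \<le> Suc k" using delta_sublist_mono[OF bc that(1)] dw by simp
    then have "\<forall>r\<in>R X w'. length r \<le> M" using A w'F by blast
    then have "w' \<notin> R X w'" using that(2) by auto
    then obtain q where "q \<in> X" "prefix q w'" unfolding R_def by auto
    moreover then have "length q \<le> Suc M" using that(2) prefix_length_le by fastforce
    ultimately show ?thesis by auto
  qed
  moreover have "card (RS (X \<inter> {u. length u \<le> Suc M}) M w) \<le> Suc k"
  proof -
    have "RS (X \<inter> {u. length u \<le> Suc M}) M w \<subseteq> R X w"
    proof
      fix u assume u: "u \<in> RS (X \<inter> {u. length u \<le> Suc M}) M w"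
      have "\<not> (\<exists>p\<in>X. prefix p u)"
      proof
        assume "\<exists>p\<in>X. prefix p u"
        then obtain p where "p \<in> X" "prefix p u" by auto
        moreover then have "length p \<le> Suc M" using u prefix_length_le unfolding RS_def by fastforce
        ultimately show False using u unfolding RS_def by auto
      qed
      then show "u \<in> R X w" using u unfolding RS_def R_def by auto
    qed
    then have "card (RS (X \<inter> {u. length u \<le> Suc M}) M w) \<le> card (R X w)" by (intro card_mono finite_R)
    then show ?thesis using dw by (simp add: delta_R[OF bc])
  qed
  ultimately show ?thesis using wF unfolding PP_def by auto
qed

lemma P_sub_U:
  assumes bc: "bifix_code X" and w: "w \<in> PP F (X \<inter> {u. length u \<le> Suc M}) M k"
  shows "delta X w \<le> k"
proof -
  have "R X w \<subseteq> RS (X \<inter> {u. length u \<le> Suc M}) M w"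
  proof
    fix r assume r: "r \<in> R X w"
    have "length r \<le> M"
    proof (rule ccontr)
      assume "\<not> length r \<le> M"
      define w' where "w' = take (Suc M) r"
      have "length w' = Suc M" using \<open>\<not> length r \<le> M\<close> unfolding w'_def by simp
      moreover have "sublist w' w"
      proof -
        have "prefix w' r" unfolding w'_def by (rule take_is_prefix)
        moreover have "suffix r w" using r unfolding R_def by auto
        ultimately show ?thesis by (meson prefix_imp_sublist suffix_imp_sublist sublist_order.order.trans)
      qed
      ultimately obtain q where "q \<in> X" "prefix q w'" using w unfolding PP_def by blast
      moreover have "prefix w' r" unfolding w'_def by (rule take_is_prefix)
      ultimately have "prefix q r" by (meson prefix_order.trans)
      then show False using r \<open>q \<in> X\<close> unfolding R_def by auto
    qed
    then show "r \<in> RS (X \<inter> {u. length u \<le> Suc M}) M w" using r unfolding R_def RS_def by auto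
  qed
  then have "card (R X w) \<le> card (RS (X \<inter> {u. length u \<le> Suc M}) M w)" by (intro card_mono finite_RS)
  then show ?thesis using w unfolding PP_def by (simp add: delta_R[OF bc])
qed


lemma finite_len_le: "finite {u::('a::finite) list. length u \<le> n}"
  using finite_lists_length_le[of "UNIV :: 'a set" n] by simp

lemma key:
  fixes F :: "('a::finite) list set"
  assumes rec: "recurrent F"
  shows "\<exists>N. \<forall>X d. bifix_code X \<and> finite X \<and> has_F_degree F X d \<and> k < d \<longrightarrow>
           (\<forall>w\<in>F. delta X w \<le> k \<longrightarrow> length w \<le> N)"
proof (induction k)
  case 0
  have "\<forall>X d. bifix_code X \<and> finite X \<and> has_F_degree F X d \<and> 0 < d \<longrightarrow>
           (\<forall>w\<in>F. delta X w \<le> 0 \<longrightarrow> length w \<le> 0)"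
  proof (intro allI impI ballI)
    fix X d w assume H: "bifix_code X \<and> finite X \<and> has_F_degree F X d \<and> 0 < d" and "w \<in> F"
      and d0: "delta X w \<le> 0"
    have "[] \<notin> X" using H by (simp add: bifix_code_def)
    then have "[] \<in> R X w" unfolding R_def by auto
    then have "card (R X w) > 0" using finite_R by (auto simp: card_gt_0_iff)
    then show "length w \<le> 0" using d0 H by (simp add: delta_R)
  qed
  then show ?case by blast
next
  case (Suc k)
  obtain N0 where IH: "\<forall>X d. bifix_code X \<and> finite X \<and> has_F_degree F X d \<and> k < d \<longrightarrow>
           (\<forall>w\<in>F. delta X w \<le> k \<longrightarrow> length w \<le> N0)" using Suc.IH by blast
  define M where "M = Suc N0"
  define B where "B = {u::'a list. length u \<le> Suc M}"
  define Fam where "Fam = {PP F S M (Suc k) | S. S \<subseteq> B \<and> finite (PP F S M (Suc k))}"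
  have "Fam \<subseteq> (\<lambda>S. PP F S M (Suc k)) ` Pow B" unfolding Fam_def by auto
  moreover have "finite B" unfolding B_def by (rule finite_len_le)
  ultimately have finFam: "finite Fam" by (meson finite_Pow_iff finite_imageI finite_subset)
  define G where "G = \<Union> Fam"
  have finG: "finite G" unfolding G_def using finFam by (intro finite_Union) (auto simp: Fam_def)
  define N where "N = Max (insert 0 (length ` G))"
  have fac: "factorial F" using rec unfolding recurrent_def by auto
  have "\<forall>X d. bifix_code X \<and> finite X \<and> has_F_degree F X d \<and> Suc k < d \<longrightarrow>
           (\<forall>w\<in>F. delta X w \<le> Suc k \<longrightarrow> length w \<le> N)"
  proof (intro allI impI ballI)
    fix X d w assume H: "bifix_code X \<and> finite X \<and> has_F_degree F X d \<and> Suc k < d"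
      and wF: "w \<in> F" and dw: "delta X w \<le> Suc k"
    have bc: "bifix_code X" and fX: "finite X" and deg: "has_F_degree F X d" and kd: "Suc k < d"
      using H by auto
    have ih: "\<forall>w\<in>F. delta X w \<le> k \<longrightarrow> length w \<le> N0"
      using IH[rule_format, of X d] bc fX deg kd by simp
    have A: "\<forall>w\<in>F. delta X w \<le> Suc k \<longrightarrow> (\<forall>r\<in>R X w. length r \<le> M)"
      using short_R[OF bc fac ih] unfolding M_def by blast
    define S where "S = X \<inter> {u. length u \<le> Suc M}"
    have wP: "w \<in> PP F S M (Suc k)" unfolding S_def by (rule U_sub_P[OF bc fac A wF dw])
    have "PP F S M (Suc k) \<subseteq> {u. length u \<le> Max (length ` X)}"
    proof
      fix u assume u: "u \<in> PP F S M (Suc k)"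
      then have uF: "u \<in> F" unfolding PP_def by auto
      have "delta X u \<le> Suc k" using P_sub_U[OF bc] u unfolding S_def by blast
      then obtain q where "q \<in> X" "length u < length q" using long_word[OF rec bc deg uF] kd by fastforce
      moreover then have "length q \<le> Max (length ` X)" using fX by (intro Max_ge) auto
      ultimately show "u \<in> {u. length u \<le> Max (length ` X)}" by simp
    qed
    then have "finite (PP F S M (Suc k))" using finite_len_le by (rule finite_subset)
    moreover have "S \<subseteq> B" unfolding S_def B_def by auto
    ultimately have "PP F S M (Suc k) \<in> Fam" unfolding Fam_def by auto
    then have "w \<in> G" using wP unfolding G_def by auto
    then show "length w \<le> N" unfolding N_def using finG by (intro Max_ge) auto
  qed
  then show ?case by blast
qed

theorem mainTheorem9:
  fixes F :: "('a::finite) list set" and d :: nat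
  assumes "recurrent F" and "d \<ge> 1"
  shows "finite {X. X \<subseteq> F \<and> finite X \<and> F_maximal_bifix F X \<and> has_F_degree F X d}"
proof -
  have fac: "factorial F" using assms(1) unfolding recurrent_def by auto
  obtain N where N: "\<forall>X d'. bifix_code X \<and> finite X \<and> has_F_degree F X d' \<and> d - 1 < d' \<longrightarrow>
           (\<forall>w\<in>F. delta X w \<le> d - 1 \<longrightarrow> length w \<le> N)" using key[OF assms(1)] by blast
  have "{X. X \<subseteq> F \<and> finite X \<and> F_maximal_bifix F X \<and> has_F_degree F X d} \<subseteq> Pow {u. length u \<le> N + 2}"
  proof
    fix X assume "X \<in> {X. X \<subseteq> F \<and> finite X \<and> F_maximal_bifix F X \<and> has_F_degree F X d}"
    then have XF: "X \<subseteq> F" and fX: "finite X" and bc: "bifix_code X" and deg: "has_F_degree F X d"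
      unfolding F_maximal_bifix_def by auto
    have le: "\<And>u. u \<in> F \<Longrightarrow> delta X u \<le> d" using deg unfolding has_F_degree_def by auto
    have ih: "\<forall>w\<in>F. delta X w \<le> d - 1 \<longrightarrow> length w \<le> N"
      using N[rule_format, of X d] bc fX deg assms(2) by simp
    show "X \<in> Pow {u. length u \<le> N + 2}"
    proof (rule PowI, rule subsetI)
      fix x assume xX: "x \<in> X"
      have "x \<noteq> []" using bc xX by (auto simp: bifix_code_def)
      then obtain y e where xy: "x = y @ [e]" by (metis rev_exhaust)
      have yF: "y \<in> F" using factorial_sublist[OF fac, of x y] XF xX xy by (auto simp: sublist_def)
      have ny: "\<not> (\<exists>q\<in>X. prefix q y)"
      proof
        assume "\<exists>q\<in>X. prefix q y"
        then obtain q where q: "q \<in> X" "prefix q y" by auto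
        then have "strict_prefix q x" using xy
          by (metis prefix_length_le prefix_order.le_less_trans prefix_order.less_le prefixeq_butlast
              butlast_snoc length_append_singleton not_less_eq_eq prefix_snoc)
        then show False using bc q(1) xX unfolding bifix_code_def by blast
      qed
      show "x \<in> {u. length u \<le> N + 2}"
      proof (cases y)
        case Nil then show ?thesis using xy by simp
      next
        case (Cons c y'')
        have yR: "y \<in> R X y" using ny unfolding R_def by auto
        have "card (R X y'') < card (R X y)" by (rule R_tl_card[OF yR Cons])
        moreover have "card (R X y) \<le> d" using le[OF yF] by (simp add: delta_R[OF bc])
        ultimately have "delta X y'' \<le> d - 1" by (simp add: delta_R[OF bc])
        moreover have "y'' \<in> F" using factorial_sublist[OF fac yF, of y''] Cons
          unfolding sublist_def by (metis append.left_neutral append_Cons append_Nil2)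
        ultimately have "length y'' \<le> N" using ih by auto
        then show ?thesis using xy Cons by simp
      qed
    qed
  qed
  moreover have "finite (Pow {u::'a list. length u \<le> N + 2})" using finite_len_le by simp
  ultimately show ?thesis by (rule finite_subset)
qed

end
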